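(* For every $\varepsilon>0$, every locally $\varepsilon$-balanced $2$-edge-coloured $K_n$ contains at least $\varepsilon^4n^4/10^5$ copies of $P_3^{\circ}$, $C_4$ or $\overline{C_4}$ (counted together).
   Context: Colours are red and blue. A $2$-edge-coloured $K_n$ is locally $\varepsilon$-balanced if every vertex is incident to at least $\varepsilon n$ red and at least $\varepsilon n$ blue edges. $C_4$ is the $2$-edge-coloured $K_4$ whose red edges form a $4$-cycle (the other two edges blue); $\overline{C_4}$ is $C_4$ with colours swapped. $P_3^{\circ}$ is the $2$-edge-coloured $K_4$ on vertices $1,2,3,4$ in which the edges $12,23,34$ are blue and the edges $13,14,24$ are red. A copy of a coloured graph $H$ in a coloured graph $G$ is an injection of $V(H)$ into $V(G)$ mapping each edge of $H$ to an edge of $G$ of the same colour. *)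

theory Defs
  imports Complex_Main "HOL-Library.FuncSet"
begin

text \<open>A 2-edge-coloured complete graph K_n: a finite vertex set V (n = card V) and a
  symmetric predicate red; for distinct u v in V the edge uv is red iff red u v, blue otherwise.\<close>

definition edge_colouring :: "'a set \<Rightarrow> ('a \<Rightarrow> 'a \<Rightarrow> bool) \<Rightarrow> bool" where
  "edge_colouring V red \<longleftrightarrow> finite V \<and> (\<forall>u\<in>V. \<forall>v\<in>V. red u v = red v u)"

definition red_deg :: "'a set \<Rightarrow> ('a \<Rightarrow> 'a \<Rightarrow> bool) \<Rightarrow> 'a \<Rightarrow> nat" where
  "red_deg V red v = card {u \<in> V. u \<noteq> v \<and> red v u}"

definition blue_deg :: "'a set \<Rightarrow> ('a \<Rightarrow> 'a \<Rightarrow> bool) \<Rightarrow> 'a \<Rightarrow> nat" where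
  "blue_deg V red v = card {u \<in> V. u \<noteq> v \<and> \<not> red v u}"

definition locally_balanced :: "real \<Rightarrow> 'a set \<Rightarrow> ('a \<Rightarrow> 'a \<Rightarrow> bool) \<Rightarrow> bool" where
  "locally_balanced \<epsilon> V red \<longleftrightarrow>
     (\<forall>v\<in>V. real (red_deg V red v) \<ge> \<epsilon> * real (card V) \<and>
            real (blue_deg V red v) \<ge> \<epsilon> * real (card V))"

text \<open>Coloured K_4 patterns on vertices 0,1,2,3 (paper's 1,2,3,4); value True = red.\<close>

definition P3o :: "nat \<Rightarrow> nat \<Rightarrow> bool" where
  "P3o i j \<longleftrightarrow> {i, j} \<in> {{0,2}, {0,3}, {1,3}}"

definition C4 :: "nat \<Rightarrow> nat \<Rightarrow> bool" where
  "C4 i j \<longleftrightarrow> {i, j} \<in> {{0,1}, {1,2}, {2,3}, {3,0}}"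

definition C4bar :: "nat \<Rightarrow> nat \<Rightarrow> bool" where
  "C4bar i j \<longleftrightarrow> \<not> C4 i j"

definition copies :: "(nat \<Rightarrow> nat \<Rightarrow> bool) \<Rightarrow> 'a set \<Rightarrow> ('a \<Rightarrow> 'a \<Rightarrow> bool) \<Rightarrow> (nat \<Rightarrow> 'a) set" where
  "copies H V red = {f \<in> {0..<4} \<rightarrow>\<^sub>E V. inj_on f {0..<4} \<and>
      (\<forall>i<4. \<forall>j<4. i \<noteq> j \<longrightarrow> red (f i) (f j) = H i j)}"

end

theory Submission imports Defs begin

definition Nb :: "'a set \<Rightarrow> ('a \<Rightarrow> 'a \<Rightarrow> bool) \<Rightarrow> 'a \<Rightarrow> 'a set" where
  "Nb V red v = {u \<in> V. u \<noteq> v \<and> red v u}"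
definition Bb :: "'a set \<Rightarrow> ('a \<Rightarrow> 'a \<Rightarrow> bool) \<Rightarrow> 'a \<Rightarrow> 'a set" where
  "Bb V red v = {u \<in> V. u \<noteq> v \<and> \<not> red v u}"
definition Xs :: "'a set \<Rightarrow> ('a \<Rightarrow> 'a \<Rightarrow> bool) \<Rightarrow> 'a \<Rightarrow> 'a \<Rightarrow> 'a set" where
  "Xs V red x y = {a \<in> V. a \<noteq> x \<and> a \<noteq> y \<and> red x a \<and> \<not> red y a}"
definition Tup :: "'a set \<Rightarrow> ('a \<Rightarrow> 'a \<Rightarrow> bool) \<Rightarrow> ('a \<times> 'a \<times> 'a \<times> 'a) set" where
  "Tup V red = (SIGMA x:V. SIGMA y:V-{x}. Xs V red x y \<times> Xs V red y x)"
definition mk :: "'a \<Rightarrow> 'a \<Rightarrow> 'a \<Rightarrow> 'a \<Rightarrow> nat \<Rightarrow> 'a" where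
  "mk a b c d = (\<lambda>i. if i = 0 then a else if i = 1 then b else if i = 2 then c
      else if i = 3 then d else undefined)"

lemma ec_fin: "edge_colouring V red \<Longrightarrow> finite V"
  by (simp add: edge_colouring_def)
lemma ec_sym: "edge_colouring V red \<Longrightarrow> u \<in> V \<Longrightarrow> v \<in> V \<Longrightarrow> red u v = red v u"
  by (simp add: edge_colouring_def)

lemma Xs_sub: "Xs V red x y \<subseteq> V" by (auto simp: Xs_def)
lemma Nb_sub: "Nb V red x \<subseteq> V" by (auto simp: Nb_def)
lemma Bb_sub: "Bb V red x \<subseteq> V" by (auto simp: Bb_def)

lemma Xs_eq: "Xs V red x y = Nb V red x \<inter> Bb V red y"
  by (auto simp: Xs_def Nb_def Bb_def)

lemma all4: "(\<forall>i<(4::nat). Q i) \<longleftrightarrow> Q 0 \<and> Q 1 \<and> Q 2 \<and> Q 3"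
  by (auto simp: less_Suc_eq numeral_eq_Suc)

lemma mk_PiE: "a \<in> V \<Longrightarrow> b \<in> V \<Longrightarrow> c \<in> V \<Longrightarrow> d \<in> V \<Longrightarrow> mk a b c d \<in> {0..<4} \<rightarrow>\<^sub>E V"
  by (auto simp: mk_def PiE_def extensional_def)

lemma mk_inj: "distinct [a,b,c,d] \<Longrightarrow> inj_on (mk a b c d) {0..<4}"
proof -
  have e: "{0..<4::nat} = {0,1,2,3}" by auto
  assume "distinct [a,b,c,d]"
  then show ?thesis unfolding e by (auto simp: inj_on_def mk_def)
qed

lemma mk_copy:
  assumes "a \<in> V" "b \<in> V" "c \<in> V" "d \<in> V" "distinct [a,b,c,d]"
    and "\<forall>i<4. \<forall>j<4. i \<noteq> j \<longrightarrow> red (mk a b c d i) (mk a b c d j) = H i j"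
  shows "mk a b c d \<in> copies H V red"
  unfolding copies_def by (intro CollectI conjI mk_PiE mk_inj assms)

lemma mk_inj2: assumes "mk a b c d = mk a' b' c' d'" shows "a = a' \<and> b = b' \<and> c = c' \<and> d = d'"
proof -
  have "mk a b c d i = mk a' b' c' d' i" for i using assms by simp
  from this[of 0] this[of 1] this[of 2] this[of 3] show ?thesis by (simp add: mk_def)
qed


lemma mk_simps: "mk a b c d 0 = a" "mk a b c d 1 = b" "mk a b c d (Suc 0) = b" "mk a b c d 2 = c" "mk a b c d 3 = d"
  by (simp_all add: mk_def)

lemma C4_tab: "C4 0 1" "\<not> C4 0 2" "C4 0 3" "C4 1 0" "C4 1 2" "\<not> C4 1 3"
  "\<not> C4 2 0" "C4 2 1" "C4 2 3" "C4 3 0" "\<not> C4 3 1" "C4 3 2" "C4 0 (Suc 0)" "C4 (Suc 0) 0" "C4 (Suc 0) 2" "\<not> C4 (Suc 0) 3" "C4 2 (Suc 0)" "\<not> C4 3 (Suc 0)"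
  by (simp_all add: C4_def doubleton_eq_iff)
lemma C4bar_tab: "\<not> C4bar 0 1" "C4bar 0 2" "\<not> C4bar 0 3" "\<not> C4bar 1 0" "\<not> C4bar 1 2" "C4bar 1 3"
  "C4bar 2 0" "\<not> C4bar 2 1" "\<not> C4bar 2 3" "\<not> C4bar 3 0" "C4bar 3 1" "\<not> C4bar 3 2" "\<not> C4bar 0 (Suc 0)" "\<not> C4bar (Suc 0) 0" "\<not> C4bar (Suc 0) 2" "C4bar (Suc 0) 3" "\<not> C4bar 2 (Suc 0)" "C4bar 3 (Suc 0)"
  by (simp_all add: C4bar_def C4_def doubleton_eq_iff)
lemma P3o_tab: "\<not> P3o 0 1" "P3o 0 2" "P3o 0 3" "\<not> P3o 1 0" "\<not> P3o 1 2" "P3o 1 3"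
  "P3o 2 0" "\<not> P3o 2 1" "\<not> P3o 2 3" "P3o 3 0" "P3o 3 1" "\<not> P3o 3 2" "\<not> P3o 0 (Suc 0)" "\<not> P3o (Suc 0) 0" "\<not> P3o (Suc 0) 2" "P3o (Suc 0) 3" "\<not> P3o 2 (Suc 0)" "P3o 3 (Suc 0)"
  by (simp_all add: P3o_def doubleton_eq_iff)

lemma all4': "(\<forall>i<(4::nat). \<forall>j<(4::nat). i \<noteq> j \<longrightarrow> Q i j) \<longleftrightarrow>
   Q 0 1 \<and> Q 0 2 \<and> Q 0 3 \<and> Q 1 0 \<and> Q 1 2 \<and> Q 1 3 \<and> Q 2 0 \<and> Q 2 1 \<and> Q 2 3 \<and> Q 3 0 \<and> Q 3 1 \<and> Q 3 2"
  unfolding all4 by simp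

lemma tup_base:
  assumes t: "(x,y,u,w) \<in> Tup V red"
  shows "x \<in> V" "y \<in> V" "u \<in> V" "w \<in> V" "x \<noteq> y" "x \<noteq> u" "x \<noteq> w" "y \<noteq> u" "y \<noteq> w"
    "red x u" "\<not> red y u" "red y w" "\<not> red x w"
  using t unfolding Tup_def Xs_def by auto

lemma tup_facts:
  assumes ec: "edge_colouring V red" and t: "(x,y,u,w) \<in> Tup V red"
  shows "x \<in> V" "y \<in> V" "u \<in> V" "w \<in> V" "x \<noteq> y" "x \<noteq> u" "x \<noteq> w" "y \<noteq> u" "y \<noteq> w" "u \<noteq> w"
    "u \<noteq> x" "w \<noteq> x" "u \<noteq> y" "w \<noteq> y" "y \<noteq> x" "w \<noteq> u"
    "red x u" "red u x" "\<not> red y u" "\<not> red u y" "red y w" "red w y" "\<not> red x w" "\<not> red w x"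
proof -
  note b = tup_base[OF t]
  have s1: "red u x = red x u" using ec_sym[OF ec b(3) b(1)] .
  have s2: "red u y = red y u" using ec_sym[OF ec b(3) b(2)] .
  have s3: "red w y = red y w" using ec_sym[OF ec b(4) b(2)] .
  have s4: "red w x = red x w" using ec_sym[OF ec b(4) b(1)] .
  show "x \<in> V" "y \<in> V" "u \<in> V" "w \<in> V" "x \<noteq> y" "x \<noteq> u" "x \<noteq> w" "y \<noteq> u" "y \<noteq> w"
    "u \<noteq> x" "w \<noteq> x" "u \<noteq> y" "w \<noteq> y" "y \<noteq> x"
    "red x u" "red u x" "\<not> red y u" "\<not> red u y" "red y w" "red w y" "\<not> red x w" "\<not> red w x"
    using b s1 s2 s3 s4 by auto
  show "u \<noteq> w" "w \<noteq> u" using b by auto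
qed

lemma tup_sym:
  assumes ec: "edge_colouring V red" and t: "(x,y,u,w) \<in> Tup V red"
  shows "red x y = red y x" "red u w = red w u"
proof -
  note f = tup_facts[OF ec t]
  show "red x y = red y x" using ec_sym[OF ec f(1) f(2)] .
  show "red u w = red w u" using ec_sym[OF ec f(3) f(4)] .
qed

lemma finite_copies: "finite V \<Longrightarrow> finite (copies H V red)"
  by (rule finite_subset[of _ "{0..<4} \<rightarrow>\<^sub>E V"]) (auto simp: copies_def intro: finite_PiE)

lemma finite_Tup: "finite V \<Longrightarrow> finite (Tup V red)"
  unfolding Tup_def by (auto intro!: finite_SigmaI finite_cartesian_product finite_subset[OF Xs_sub])

lemma copy_C4:
  assumes ec: "edge_colouring V red" and t: "(x,y,u,w) \<in> Tup V red" and r: "red x y" "red u w"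
  shows "mk x u w y \<in> copies C4 V red"
  proof -
  have r2: "red y x" "red w u" using r tup_sym[OF ec t] by auto
  show ?thesis
    by (rule mk_copy) (use tup_facts[OF ec t] r r2 in \<open>simp_all add: all4' mk_simps C4_tab\<close>)
qed
lemma copy_C4bar:
  assumes ec: "edge_colouring V red" and t: "(x,y,u,w) \<in> Tup V red" and r: "\<not> red x y" "\<not> red u w"
  shows "mk x y u w \<in> copies C4bar V red"
  proof -
  have r2: "\<not> red y x" "\<not> red w u" using r tup_sym[OF ec t] by auto
  show ?thesis
    by (rule mk_copy) (use tup_facts[OF ec t] r r2 in \<open>simp_all add: all4' mk_simps C4bar_tab\<close>)
qed
lemma copy_P3o_1:
  assumes ec: "edge_colouring V red" and t: "(x,y,u,w) \<in> Tup V red" and r: "red x y" "\<not> red u w"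
  shows "mk x w u y \<in> copies P3o V red"
  proof -
  have r2: "red y x" "\<not> red w u" using r tup_sym[OF ec t] by auto
  show ?thesis
    by (rule mk_copy) (use tup_facts[OF ec t] r r2 in \<open>simp_all add: all4' mk_simps P3o_tab\<close>)
qed
lemma copy_P3o_2:
  assumes ec: "edge_colouring V red" and t: "(x,y,u,w) \<in> Tup V red" and r: "\<not> red x y" "red u w"
  shows "mk u y x w \<in> copies P3o V red"
  proof -
  have r2: "\<not> red y x" "red w u" using r tup_sym[OF ec t] by auto
  show ?thesis
    by (rule mk_copy) (use tup_facts[OF ec t] r r2 in \<open>simp_all add: all4' mk_simps P3o_tab\<close>)
qed

lemma card_Un4: "finite A \<Longrightarrow> finite B \<Longrightarrow> finite C \<Longrightarrow> finite D \<Longrightarrow>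
  card (A \<union> B \<union> C \<union> D) \<le> card A + card B + card C + card D"
proof -
  have "card (A \<union> B \<union> C \<union> D) \<le> card (A \<union> B \<union> C) + card D" by (rule card_Un_le)
  moreover have "card (A \<union> B \<union> C) \<le> card (A \<union> B) + card C" by (rule card_Un_le)
  moreover have "card (A \<union> B) \<le> card A + card B" by (rule card_Un_le)
  ultimately show ?thesis by linarith
qed

lemma Tup_copies:
  assumes ec: "edge_colouring V red"
  shows "card (Tup V red) \<le> 2 * card (copies P3o V red) + card (copies C4 V red) + card (copies C4bar V red)"
proof -
  have fin: "finite V" using ec by (simp add: edge_colouring_def)
  define T1 where "T1 = {t \<in> Tup V red. red (fst t) (fst (snd t)) \<and> red (fst (snd (snd t))) (snd (snd (snd t)))}"
  define T2 where "T2 = {t \<in> Tup V red. \<not> red (fst t) (fst (snd t)) \<and> \<not> red (fst (snd (snd t))) (snd (snd (snd t)))}"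
  define T3 where "T3 = {t \<in> Tup V red. red (fst t) (fst (snd t)) \<and> \<not> red (fst (snd (snd t))) (snd (snd (snd t)))}"
  define T4 where "T4 = {t \<in> Tup V red. \<not> red (fst t) (fst (snd t)) \<and> red (fst (snd (snd t))) (snd (snd (snd t)))}"
  have U: "Tup V red = T1 \<union> T2 \<union> T3 \<union> T4"
    unfolding T1_def T2_def T3_def T4_def by blast
  have ft: "finite (Tup V red)" using finite_Tup[OF fin] .
  have fins: "finite T1" "finite T2" "finite T3" "finite T4"
    unfolding T1_def T2_def T3_def T4_def using ft by auto
  define g1 where "g1 = (\<lambda>(x::'a,y::'a,u::'a,w::'a). mk x u w y)"
  define g2 where "g2 = (\<lambda>(x::'a,y::'a,u::'a,w::'a). mk x y u w)"
  define g3 where "g3 = (\<lambda>(x::'a,y::'a,u::'a,w::'a). mk x w u y)"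
  define g4 where "g4 = (\<lambda>(x::'a,y::'a,u::'a,w::'a). mk u y x w)"
  have i1: "inj_on g1 T1" unfolding inj_on_def g1_def by (auto dest: mk_inj2)
  have i2: "inj_on g2 T2" unfolding inj_on_def g2_def by (auto dest: mk_inj2)
  have i3: "inj_on g3 T3" unfolding inj_on_def g3_def by (auto dest: mk_inj2)
  have i4: "inj_on g4 T4" unfolding inj_on_def g4_def by (auto dest: mk_inj2)
  have s1: "g1 ` T1 \<subseteq> copies C4 V red"
  proof
    fix f assume "f \<in> g1 ` T1"
    then obtain x y u w where "(x,y,u,w) \<in> T1" "f = mk x u w y" unfolding g1_def by auto
    then show "f \<in> copies C4 V red" using copy_C4[OF ec] unfolding T1_def by auto
  qed
  have s2: "g2 ` T2 \<subseteq> copies C4bar V red"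
  proof
    fix f assume "f \<in> g2 ` T2"
    then obtain x y u w where "(x,y,u,w) \<in> T2" "f = mk x y u w" unfolding g2_def by auto
    then show "f \<in> copies C4bar V red" using copy_C4bar[OF ec] unfolding T2_def by auto
  qed
  have s3: "g3 ` T3 \<subseteq> copies P3o V red"
  proof
    fix f assume "f \<in> g3 ` T3"
    then obtain x y u w where "(x,y,u,w) \<in> T3" "f = mk x w u y" unfolding g3_def by auto
    then show "f \<in> copies P3o V red" using copy_P3o_1[OF ec] unfolding T3_def by auto
  qed
  have s4: "g4 ` T4 \<subseteq> copies P3o V red"
  proof
    fix f assume "f \<in> g4 ` T4"
    then obtain x y u w where "(x,y,u,w) \<in> T4" "f = mk u y x w" unfolding g4_def by auto
    then show "f \<in> copies P3o V red" using copy_P3o_2[OF ec] unfolding T4_def by auto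
  qed
  have c1: "card T1 \<le> card (copies C4 V red)" by (rule card_inj_on_le[OF i1 s1 finite_copies[OF fin]])
  have c2: "card T2 \<le> card (copies C4bar V red)" by (rule card_inj_on_le[OF i2 s2 finite_copies[OF fin]])
  have c3: "card T3 \<le> card (copies P3o V red)" by (rule card_inj_on_le[OF i3 s3 finite_copies[OF fin]])
  have c4: "card T4 \<le> card (copies P3o V red)" by (rule card_inj_on_le[OF i4 s4 finite_copies[OF fin]])
  have "card (Tup V red) \<le> card T1 + card T2 + card T3 + card T4"
    unfolding U using card_Un4[OF fins] .
  then show ?thesis using c1 c2 c3 c4 by linarith
qed

lemma card_Tup:
  assumes ec: "edge_colouring V red"
  shows "card (Tup V red) = (\<Sum>x\<in>V. \<Sum>y\<in>V-{x}. card (Xs V red x y) * card (Xs V red y x))"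
proof -
  have fin: "finite V" using ec by (simp add: edge_colouring_def)
  have fx: "finite (Xs V red a b)" for a b using finite_subset[OF Xs_sub fin] .
  show ?thesis unfolding Tup_def
    by (simp add: card_SigmaI fin fx card_cartesian_product finite_SigmaI finite_cartesian_product)
qed


lemma deg_split:
  assumes ec: "edge_colouring V red" and xy: "x \<in> V" "y \<in> V" "x \<noteq> y"
  shows "card (Nb V red x) = card (Xs V red x y) + card (Nb V red x \<inter> Nb V red y) + (if red x y then 1 else 0)"
proof -
  have fin: "finite V" using ec by (simp add: edge_colouring_def)
  define E where "E = (if red x y then {y} else {})"
  have eq: "Nb V red x = Xs V red x y \<union> (Nb V red x \<inter> Nb V red y) \<union> E"
    using xy unfolding E_def Nb_def Xs_def by auto
  have f1: "finite (Xs V red x y)" using finite_subset[OF Xs_sub fin] .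
  have f2: "finite (Nb V red x \<inter> Nb V red y)" using finite_subset[OF Nb_sub fin] by blast
  have f3: "finite E" unfolding E_def by auto
  have d1: "Xs V red x y \<inter> (Nb V red x \<inter> Nb V red y) = {}" unfolding Xs_def Nb_def by auto
  have d2: "(Xs V red x y \<union> (Nb V red x \<inter> Nb V red y)) \<inter> E = {}" unfolding E_def Xs_def Nb_def by auto
  have "card (Nb V red x) = card (Xs V red x y \<union> (Nb V red x \<inter> Nb V red y) \<union> E)"
    by (rule arg_cong[where f=card, OF eq])
  also have "\<dots> = card (Xs V red x y \<union> (Nb V red x \<inter> Nb V red y)) + card E"
    by (rule card_Un_disjoint[OF _ f3 d2]) (use f1 f2 in auto)
  also have "card (Xs V red x y \<union> (Nb V red x \<inter> Nb V red y)) = card (Xs V red x y) + card (Nb V red x \<inter> Nb V red y)"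
    by (rule card_Un_disjoint[OF f1 f2 d1])
  also have "card E = (if red x y then 1 else 0)" unfolding E_def by simp
  finally show ?thesis .
qed

lemma X_mono:
  assumes ec: "edge_colouring V red" and xy: "x \<in> V" "y \<in> V" "x \<noteq> y"
    and le: "card (Nb V red x) \<le> card (Nb V red y)"
  shows "card (Xs V red x y) \<le> card (Xs V red y x)"
proof -
  have s: "red x y = red y x" using ec_sym[OF ec xy(1) xy(2)] .
  have a: "card (Nb V red x) = card (Xs V red x y) + card (Nb V red x \<inter> Nb V red y) + (if red x y then 1 else 0)"
    by (rule deg_split[OF ec xy])
  have b: "card (Nb V red y) = card (Xs V red y x) + card (Nb V red y \<inter> Nb V red x) + (if red y x then 1 else 0)"
    by (rule deg_split[OF ec xy(2) xy(1)]) (use xy in auto)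
  have c: "Nb V red y \<inter> Nb V red x = Nb V red x \<inter> Nb V red y" by blast
  show ?thesis using a b c s le by (cases "red x y") auto
qed

lemma deg_le:
  assumes ec: "edge_colouring V red" and xy: "x \<in> V" "y \<in> V" "x \<noteq> y"
  shows "card (Nb V red x) \<le> card (Xs V red x y) + card (Nb V red x \<inter> Nb V red y) + 1"
  using deg_split[OF ec xy] by (cases "red x y") auto

lemma deg_sum:
  assumes ec: "edge_colouring V red" and v: "v \<in> V"
  shows "card (Nb V red v) + card (Bb V red v) = card V - 1"
proof -
  have fin: "finite V" using ec by (simp add: edge_colouring_def)
  have "Nb V red v \<union> Bb V red v = V - {v}" unfolding Nb_def Bb_def by auto
  moreover have "Nb V red v \<inter> Bb V red v = {}" unfolding Nb_def Bb_def by auto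
  moreover have "finite (Nb V red v)" "finite (Bb V red v)"
    using finite_subset[OF Nb_sub fin] finite_subset[OF Bb_sub fin] by auto
  ultimately have "card (Nb V red v) + card (Bb V red v) = card (V - {v})"
    by (metis card_Un_disjoint)
  then show ?thesis using v fin by simp
qed

lemma top_set:
  fixes f :: "'a \<Rightarrow> nat"
  assumes fin: "finite V" and hV: "h \<le> card V"
  shows "\<exists>H\<subseteq>V. card H = h \<and> (\<forall>y\<in>H. \<forall>x\<in>V-H. f x \<le> f y)"
  using hV
proof (induction h)
  case 0
  show ?case by (intro exI[of _ "{}"]) auto
next
  case (Suc h)
  then obtain H where H: "H \<subseteq> V" "card H = h" "\<forall>y\<in>H. \<forall>x\<in>V-H. f x \<le> f y" by auto
  have finH: "finite H" using finite_subset[OF H(1) fin] .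
  have ne: "V - H \<noteq> {}"
  proof
    assume "V - H = {}"
    then have "V = H" using H(1) by auto
    then show False using H(2) Suc.prems by simp
  qed
  have finD: "finite (V - H)" using fin by auto
  define m where "m = Max (f ` (V - H))"
  have "m \<in> f ` (V - H)" unfolding m_def using finD ne by (intro Max_in) auto
  then obtain y where y: "y \<in> V - H" "f y = m" by auto
  have ymax: "\<forall>x\<in>V-H. f x \<le> f y" using y(2) finD unfolding m_def by auto
  show ?case
  proof (intro exI[of _ "insert y H"] conjI)
    show "insert y H \<subseteq> V" using y H by auto
    show "card (insert y H) = Suc h" using y(1) finH H(2) by simp
    show "\<forall>z\<in>insert y H. \<forall>x\<in>V - insert y H. f x \<le> f z" using ymax H(3) by auto
  qed
qed

lemma Nb_sym:
  assumes ec: "edge_colouring V red" and "x \<in> V" "u \<in> V"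
  shows "(u \<in> Nb V red x) = (x \<in> Nb V red u)"
  using ec_sym[OF ec assms(2) assms(3)] assms(2,3) unfolding Nb_def by auto

lemma card_as_sum:
  assumes "finite Q"
  shows "card (A \<inter> Q) = (\<Sum>u\<in>Q. if u \<in> A then 1 else (0::nat))"
proof -
  have "A \<inter> Q = {u \<in> Q. u \<in> A}" by auto
  then have "card (A \<inter> Q) = (\<Sum>u\<in>{u \<in> Q. u \<in> A}. 1)" by simp
  also have "\<dots> = (\<Sum>u\<in>Q. if u \<in> A then 1 else 0)" using assms by (rule sum.inter_filter)
  finally show ?thesis .
qed

lemma double_count:
  assumes ec: "edge_colouring V red" and QV: "Q \<subseteq> V"
  shows "(\<Sum>x\<in>V. card (Nb V red x \<inter> Q)^2) = (\<Sum>u\<in>Q. \<Sum>u'\<in>Q. card (Nb V red u \<inter> Nb V red u'))"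
proof -
  have fin: "finite V" using ec by (simp add: edge_colouring_def)
  have finQ: "finite Q" using finite_subset[OF QV fin] .
  define I where "I = (\<lambda>u x. if u \<in> Nb V red x then 1 else (0::nat))"
  have "(\<Sum>x\<in>V. card (Nb V red x \<inter> Q)^2) = (\<Sum>x\<in>V. \<Sum>u\<in>Q. \<Sum>u'\<in>Q. I u x * I u' x)"
  proof (rule sum.cong[OF refl])
    fix x assume "x \<in> V"
    have "card (Nb V red x \<inter> Q) = (\<Sum>u\<in>Q. I u x)" unfolding I_def by (rule card_as_sum[OF finQ])
    then show "card (Nb V red x \<inter> Q)^2 = (\<Sum>u\<in>Q. \<Sum>u'\<in>Q. I u x * I u' x)"
      by (simp add: power2_eq_square sum_product)
  qed
  also have "\<dots> = (\<Sum>u\<in>Q. \<Sum>x\<in>V. \<Sum>u'\<in>Q. I u x * I u' x)" by (rule sum.swap)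
  also have "\<dots> = (\<Sum>u\<in>Q. \<Sum>u'\<in>Q. \<Sum>x\<in>V. I u x * I u' x)" by (rule sum.cong[OF refl], rule sum.swap)
  also have "\<dots> = (\<Sum>u\<in>Q. \<Sum>u'\<in>Q. card (Nb V red u \<inter> Nb V red u'))"
  proof (intro sum.cong[OF refl])
    fix u u' assume u: "u \<in> Q" and u': "u' \<in> Q"
    have "(\<Sum>x\<in>V. I u x * I u' x) = (\<Sum>x\<in>V. if x \<in> Nb V red u \<inter> Nb V red u' then 1 else 0)"
    proof (rule sum.cong[OF refl])
      fix x assume x: "x \<in> V"
      have a: "(u \<in> Nb V red x) = (x \<in> Nb V red u)" by (rule Nb_sym[OF ec x subsetD[OF QV u]])
      have b: "(u' \<in> Nb V red x) = (x \<in> Nb V red u')" by (rule Nb_sym[OF ec x subsetD[OF QV u']])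
      show "I u x * I u' x = (if x \<in> Nb V red u \<inter> Nb V red u' then 1 else 0)"
        unfolding I_def a b by auto
    qed
    also have "\<dots> = card ((Nb V red u \<inter> Nb V red u') \<inter> V)" by (rule card_as_sum[OF fin, symmetric])
    also have "(Nb V red u \<inter> Nb V red u') \<inter> V = Nb V red u \<inter> Nb V red u'" unfolding Nb_def by blast
    finally show "(\<Sum>x\<in>V. I u x * I u' x) = card (Nb V red u \<inter> Nb V red u')" .
  qed
  finally show ?thesis .
qed


lemma T_real:
  assumes ec: "edge_colouring V red"
  shows "real (card (Tup V red)) = (\<Sum>x\<in>V. \<Sum>y\<in>V-{x}. real (card (Xs V red x y)) * real (card (Xs V red y x)))"
  unfolding card_Tup[OF ec] by (simp add: of_nat_sum)

lemma exists_tup: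
  assumes ec: "edge_colouring V red" and ne: "V \<noteq> {}"
    and deg: "\<forall>v\<in>V. Nb V red v \<noteq> {} \<and> Bb V red v \<noteq> {}"
  shows "Tup V red \<noteq> {}"
proof -
  have fin: "finite V" using ec by (simp add: edge_colouring_def)
  have c1: "1 \<le> card V" using fin ne by (simp add: Suc_le_eq card_gt_0_iff)
  obtain H where H: "H \<subseteq> V" "card H = 1" "\<forall>y\<in>H. \<forall>x\<in>V-H. card (Nb V red x) \<le> card (Nb V red y)"
    using top_set[OF fin c1, of "\<lambda>v. card (Nb V red v)"] by blast
  then obtain y where Hy: "H = {y}" by (meson card_1_singletonE)
  have y: "y \<in> V" using H(1) Hy by auto
  have ymax: "\<forall>x\<in>V. card (Nb V red x) \<le> card (Nb V red y)" using H(3) Hy by auto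
  obtain u where u: "u \<in> Bb V red y" using deg y by blast
  have uV: "u \<in> V" "u \<noteq> y" "\<not> red y u" using u unfolding Bb_def by auto
  obtain x where x: "x \<in> Nb V red u" using deg uV(1) by blast
  have xV: "x \<in> V" "x \<noteq> u" "red u x" using x unfolding Nb_def by auto
  have rxu: "red x u" using ec_sym[OF ec uV(1) xV(1)] xV(3) by simp
  have ruy: "\<not> red u y" using ec_sym[OF ec uV(1) y] uV(3) by simp
  have xy: "x \<noteq> y" using xV(3) ruy by auto
  have uX: "u \<in> Xs V red x y" unfolding Xs_def using uV xV rxu by auto
  have finX: "finite (Xs V red a b)" for a b using finite_subset[OF Xs_sub fin] .
  have "0 < card (Xs V red x y)" using uX finX by (auto simp: card_gt_0_iff)
  moreover have "card (Xs V red x y) \<le> card (Xs V red y x)"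
    by (rule X_mono[OF ec xV(1) y xy]) (use ymax xV(1) in auto)
  ultimately have "Xs V red y x \<noteq> {}" by auto
  then obtain w where w: "w \<in> Xs V red y x" by blast
  have "(x,y,u,w) \<in> Tup V red" unfolding Tup_def using xV(1) y xy uX w by auto
  then show ?thesis by auto
qed

lemma alg1:
  fixes a c p r :: real
  assumes "0 \<le> a" "0 \<le> c" "0 \<le> p" "0 \<le> r" "a - c \<le> p" "a - c \<le> r"
  shows "a^2 - 2*a*c \<le> p*r"
proof (cases "a \<le> c")
  case True
  have "a*(a - 2*c) \<le> 0" using True assms by (intro mult_nonneg_nonpos) auto
  then have "a^2 - 2*a*c \<le> 0" by (simp add: power2_eq_square algebra_simps)
  then show ?thesis using assms by (metis mult_nonneg_nonneg order_trans)
next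
  case False
  then have "(a-c)*(a-c) \<le> p*r" using assms by (intro mult_mono) auto
  moreover have "a^2 - 2*a*c \<le> (a-c)*(a-c)" by (simp add: power2_eq_square algebra_simps)
  ultimately show ?thesis by linarith
qed

lemma alg2:
  fixes q k a S :: real
  assumes k16: "16 \<le> k" and qk: "k \<le> q" and a: "a = k - 1" and S: "S < q^2*k/4"
  shows "k^4/128 \<le> q*(q-1)*a^2 - 2*a*S"
proof -
  have a0: "0 \<le> a" using a k16 by simp
  have e1: "q*(q-1)*a^2 - 2*a*(q^2*k/4) \<le> q*(q-1)*a^2 - 2*a*S"
    using mult_left_mono[OF less_imp_le[OF S], of "2*a"] a0 by simp
  have e2: "q*(q-1)*a^2 - 2*a*(q^2*k/4) = q*a*((q-1)*a - q*k/2)"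
    by (simp add: power2_eq_square algebra_simps)
  have "q*16 \<le> q*k" using k16 qk by (intro mult_left_mono) auto
  moreover have "(q-1)*a - q*k/2 = q*k/2 - q - k + 1" by (simp add: a algebra_simps)
  moreover have "q*(3*k/8) = 3*(q*k)/8" "q*k/2 = (q*k)/2" by simp_all
  ultimately have e3: "q*(3*k/8) \<le> (q-1)*a - q*k/2" using qk k16 by linarith
  have qa0: "0 \<le> q*a" using a0 qk k16 by simp
  have e4: "q*a*(q*(3*k/8)) \<le> q*a*((q-1)*a - q*k/2)" by (rule mult_left_mono[OF e3 qa0])
  have a15: "15*k/16 \<le> a" using a k16 by simp
  have "k * (15*k/16) \<le> q*a" using qk a15 k16 by (intro mult_mono) auto
  moreover have "k*(3*k/8) \<le> q*(3*k/8)" using qk k16 by (intro mult_right_mono) auto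
  ultimately have "(k * (15*k/16)) * (k*(3*k/8)) \<le> (q*a) * (q*(3*k/8))"
    using k16 qa0 a15 by (intro mult_mono) auto
  then have e5: "45*k^4/128 \<le> q*a*(q*(3*k/8))" by (simp add: power4_eq_xxxx algebra_simps)
  have "k^4/128 \<le> 45*k^4/128" using k16 by simp
  then show ?thesis using e1 e2 e4 e5 by linarith
qed


lemma quant:
  assumes ec: "edge_colouring V red" and k16: "16 \<le> k" and ne: "V \<noteq> {}"
    and deg: "\<forall>v\<in>V. k \<le> real (card (Nb V red v)) \<and> k \<le> real (card (Bb V red v))"
  shows "k^4/128 \<le> real (card (Tup V red))"
proof -
  have fin: "finite V" using ec by (simp add: edge_colouring_def)
  define X where "X = (\<lambda>a b. real (card (Xs V red a b)))"
  define c where "c = (\<lambda>a b. real (card (Nb V red a \<inter> Nb V red b)))"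
  define F where "F = (\<lambda>a b. X a b * X b a)"
  have T: "real (card (Tup V red)) = (\<Sum>x\<in>V. \<Sum>y\<in>V-{x}. F x y)"
    using T_real[OF ec] unfolding F_def X_def .
  have Fnn: "0 \<le> F a b" for a b unfolding F_def X_def by simp
  have Xnn: "0 \<le> X a b" for a b unfolding X_def by simp
  have cnn: "0 \<le> c a b" for a b unfolding c_def by simp
  obtain v0 where v0: "v0 \<in> V" using ne by blast
  have ds: "card (Nb V red v0) + card (Bb V red v0) = card V - 1" by (rule deg_sum[OF ec v0])
  have cV: "1 \<le> card V" using fin ne by (simp add: Suc_le_eq card_gt_0_iff)
  have "real (card (Nb V red v0)) + real (card (Bb V red v0)) = real (card V) - 1"
    using ds cV by (metis of_nat_1 of_nat_add of_nat_diff)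
  then have kn: "2*k \<le> real (card V) - 1" using deg v0 by fastforce
  define h where "h = nat \<lfloor>k/8\<rfloor>"
  have fl0: "0 \<le> \<lfloor>k/8\<rfloor>" using k16 by simp
  have hr: "real h = real_of_int \<lfloor>k/8\<rfloor>" unfolding h_def using fl0 by simp
  have h1: "real h \<le> k/8" unfolding hr by linarith
  have h2: "k/16 \<le> real h" unfolding hr using k16 by linarith
  have h3: "h \<le> card V" using h1 kn k16 by linarith
  obtain H where H: "H \<subseteq> V" "card H = h"
      "\<forall>y\<in>H. \<forall>x\<in>V-H. card (Nb V red x) \<le> card (Nb V red y)"
    using top_set[OF fin h3, of "\<lambda>v. card (Nb V red v)"] by blast
  have finH: "finite H" using finite_subset[OF H(1) fin] .
  define S0 where "S0 = (\<lambda>y. \<Sum>u\<in>Bb V red y. \<Sum>u'\<in>Bb V red y - {u}. c u u')"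
  show ?thesis
  proof (cases "\<exists>y\<in>H. S0 y < real (card (Bb V red y))^2 * k / 4")
    case True
    then obtain y where y: "y \<in> H" "S0 y < real (card (Bb V red y))^2 * k / 4" by blast
    define Q where "Q = Bb V red y"
    define q where "q = real (card Q)"
    have yV: "y \<in> V" using y(1) H(1) by auto
    have QV: "Q \<subseteq> V" unfolding Q_def by (rule Bb_sub)
    have finQ: "finite Q" using finite_subset[OF QV fin] .
    have qk: "k \<le> q" unfolding q_def Q_def using deg yV by auto
    have step1: "(\<Sum>u\<in>Q. \<Sum>u'\<in>Q-{u}. F u u') \<le> (\<Sum>x\<in>V. \<Sum>y\<in>V-{x}. F x y)"
    proof -
      have "(\<Sum>u\<in>Q. \<Sum>u'\<in>Q-{u}. F u u') \<le> (\<Sum>u\<in>Q. \<Sum>u'\<in>V-{u}. F u u')"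
        by (intro sum_mono sum_mono2) (use fin QV Fnn in auto)
      also have "\<dots> \<le> (\<Sum>x\<in>V. \<Sum>y\<in>V-{x}. F x y)"
        by (intro sum_mono2) (use fin QV Fnn in \<open>auto intro: sum_nonneg\<close>)
      finally show ?thesis .
    qed
    define a where "a = k - 1"
    have a0: "0 \<le> a" unfolding a_def using k16 by simp
    have step2: "a^2 - 2*a*c u u' \<le> F u u'" if u: "u \<in> Q" and u': "u' \<in> Q - {u}" for u u'
    proof -
      have uV: "u \<in> V" and u'V: "u' \<in> V" and uu: "u \<noteq> u'" using u u' QV by auto
      have d1: "card (Nb V red u) \<le> card (Xs V red u u') + card (Nb V red u \<inter> Nb V red u') + 1"
        by (rule deg_le[OF ec uV u'V uu])
      have d2: "card (Nb V red u') \<le> card (Xs V red u' u) + card (Nb V red u' \<inter> Nb V red u) + 1"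
        by (rule deg_le[OF ec u'V uV]) (use uu in auto)
      have cs: "Nb V red u' \<inter> Nb V red u = Nb V red u \<inter> Nb V red u'" by blast
      have k1: "k \<le> real (card (Nb V red u))" using deg uV by auto
      have k2: "k \<le> real (card (Nb V red u'))" using deg u'V by auto
      have r1: "a - c u u' \<le> X u u'" using d1 k1 unfolding a_def c_def X_def
        by (smt (verit) of_nat_add of_nat_le_iff of_nat_1)
      have r2: "a - c u u' \<le> X u' u" using d2 k2 unfolding a_def c_def X_def cs
        by (smt (verit) of_nat_add of_nat_le_iff of_nat_1)
      show ?thesis unfolding F_def by (rule alg1[OF a0 cnn Xnn Xnn r1 r2])
    qed
    have step3: "(\<Sum>u\<in>Q. \<Sum>u'\<in>Q-{u}. a^2 - 2*a*c u u') = q*(q-1)*a^2 - 2*a*S0 y"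
    proof -
      have "(\<Sum>u'\<in>Q-{u}. a^2 - 2*a*c u u') = (q-1)*a^2 - 2*a*(\<Sum>u'\<in>Q-{u}. c u u')" if u: "u \<in> Q" for u
      proof -
        have "card (Q - {u}) = card Q - 1" using u finQ by simp
        moreover have "1 \<le> card Q" using u finQ by (simp add: Suc_le_eq card_gt_0_iff) blast
        ultimately have "real (card (Q - {u})) = q - 1" unfolding q_def by simp
        then show ?thesis by (simp add: sum_subtractf sum_distrib_left)
      qed
      then have "(\<Sum>u\<in>Q. \<Sum>u'\<in>Q-{u}. a^2 - 2*a*c u u') = (\<Sum>u\<in>Q. (q-1)*a^2 - 2*a*(\<Sum>u'\<in>Q-{u}. c u u'))"
        by (rule sum.cong[OF refl])
      also have "\<dots> = q*((q-1)*a^2) - 2*a*S0 y"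
        unfolding S0_def Q_def[symmetric] q_def by (simp add: sum_subtractf sum_distrib_left)
      finally show ?thesis by simp
    qed
    have step4: "k^4/128 \<le> q*(q-1)*a^2 - 2*a*S0 y"
      by (rule alg2[OF k16 qk a_def]) (use y(2) in \<open>simp add: q_def Q_def\<close>)
    have "(\<Sum>u\<in>Q. \<Sum>u'\<in>Q-{u}. a^2 - 2*a*c u u') \<le> (\<Sum>u\<in>Q. \<Sum>u'\<in>Q-{u}. F u u')"
      by (intro sum_mono step2) auto
    then show ?thesis using step1 step3 step4 T by linarith
  next
    case False
    then have S0big: "real (card (Bb V red y))^2 * k / 4 \<le> S0 y" if "y \<in> H" for y
      using that by (simp add: not_less)
    have per_y: "k^3/8 \<le> (\<Sum>x\<in>V-H. F x y)" if y: "y \<in> H" for y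
    proof -
      define Q where "Q = Bb V red y"
      define q where "q = real (card Q)"
      have yV: "y \<in> V" using y H(1) by auto
      have QV: "Q \<subseteq> V" unfolding Q_def by (rule Bb_sub)
      have finQ: "finite Q" using finite_subset[OF QV fin] .
      have qk: "k \<le> q" unfolding q_def Q_def using deg yV by auto
      define g where "g = (\<lambda>x. real (card (Nb V red x \<inter> Q))^2)"
      have dc: "(\<Sum>x\<in>V. g x) = (\<Sum>u\<in>Q. \<Sum>u'\<in>Q. c u u')"
      proof -
        have "(\<Sum>x\<in>V. card (Nb V red x \<inter> Q)^2) = (\<Sum>u\<in>Q. \<Sum>u'\<in>Q. card (Nb V red u \<inter> Nb V red u'))"
          by (rule double_count[OF ec QV])
        then have "real (\<Sum>x\<in>V. card (Nb V red x \<inter> Q)^2) = real (\<Sum>u\<in>Q. \<Sum>u'\<in>Q. card (Nb V red u \<inter> Nb V red u'))"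
          by simp
        then show ?thesis unfolding g_def c_def by (simp add: of_nat_sum)
      qed
      have "S0 y \<le> (\<Sum>u\<in>Q. \<Sum>u'\<in>Q. c u u')"
        unfolding S0_def Q_def[symmetric] by (intro sum_mono sum_mono2) (use finQ cnn in auto)
      then have gV: "q^2*k/4 \<le> (\<Sum>x\<in>V. g x)" using S0big[OF y] dc unfolding q_def Q_def by linarith
      have gH: "(\<Sum>x\<in>H. g x) \<le> real h * q^2"
      proof -
        have "g x \<le> q^2" for x
        proof -
          have "card (Nb V red x \<inter> Q) \<le> card Q" using finQ by (intro card_mono) auto
          then show ?thesis unfolding g_def q_def by (intro power_mono) auto
        qed
        then have "(\<Sum>x\<in>H. g x) \<le> real (card H) * q^2" by (intro sum_bounded_above) auto
        then show ?thesis using H(2) by simp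
      qed
      have split: "(\<Sum>x\<in>V. g x) = (\<Sum>x\<in>V-H. g x) + (\<Sum>x\<in>H. g x)"
        by (rule sum.subset_diff[OF H(1) fin])
      have "real h * q^2 \<le> (k/8) * q^2" using h1 by (intro mult_right_mono) auto
      moreover have "(k/8) * q^2 = q^2*k/8" "q^2*k/4 = 2*(q^2*k/8)" by simp_all
      ultimately have gVH: "q^2*k/8 \<le> (\<Sum>x\<in>V-H. g x)" using gV gH split by linarith
      have "k^2 \<le> q^2" using qk k16 by (intro power_mono) auto
      then have "k^2 * k \<le> q^2 * k" using k16 by (intro mult_right_mono) auto
      then have kq: "k^3/8 \<le> q^2*k/8" by (simp add: power3_eq_cube power2_eq_square)
      have gF: "g x \<le> F x y" if x: "x \<in> V - H" for x
      proof -
        have xV: "x \<in> V" and xy: "x \<noteq> y" using x y by auto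
        have le: "card (Nb V red x) \<le> card (Nb V red y)" using H(3) y x by auto
        have m: "X x y \<le> X y x" unfolding X_def using X_mono[OF ec xV yV xy le] by simp
        have e: "X x y = real (card (Nb V red x \<inter> Q))" unfolding X_def Q_def Xs_eq ..
        have "X x y * X x y \<le> X x y * X y x" using m Xnn by (intro mult_left_mono) auto
        then show ?thesis unfolding g_def F_def e[symmetric] by (simp add: power2_eq_square)
      qed
      have "(\<Sum>x\<in>V-H. g x) \<le> (\<Sum>x\<in>V-H. F x y)" by (intro sum_mono gF)
      then show ?thesis using gVH kq by linarith
    qed
    have swap: "(\<Sum>y\<in>H. \<Sum>x\<in>V-H. F x y) \<le> (\<Sum>x\<in>V. \<Sum>y\<in>V-{x}. F x y)"
    proof -
      have "(\<Sum>y\<in>H. \<Sum>x\<in>V-H. F x y) = (\<Sum>x\<in>V-H. \<Sum>y\<in>H. F x y)" by (rule sum.swap)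
      also have "\<dots> \<le> (\<Sum>x\<in>V-H. \<Sum>y\<in>V-{x}. F x y)"
        by (intro sum_mono sum_mono2) (use fin H(1) Fnn in auto)
      also have "\<dots> \<le> (\<Sum>x\<in>V. \<Sum>y\<in>V-{x}. F x y)"
        by (intro sum_mono2) (use fin Fnn in \<open>auto intro: sum_nonneg\<close>)
      finally show ?thesis .
    qed
    have "(\<Sum>y\<in>H. k^3/8) \<le> (\<Sum>y\<in>H. \<Sum>x\<in>V-H. F x y)" by (intro sum_mono per_y)
    then have "real h * (k^3/8) \<le> (\<Sum>y\<in>H. \<Sum>x\<in>V-H. F x y)" using H(2) by simp
    moreover have "(k/16) * (k^3/8) \<le> real h * (k^3/8)" using h2 k16 by (intro mult_right_mono) auto
    moreover have "k^4/128 = (k/16) * (k^3/8)" by (simp add: power_numeral_reduce)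
    ultimately show ?thesis using swap T by linarith
  qed
qed


theorem proposition2p2:
  fixes V :: "'a set" and red :: "'a \<Rightarrow> 'a \<Rightarrow> bool" and \<epsilon> :: real
  assumes "\<epsilon> > 0"
    and "edge_colouring V red"
    and "locally_balanced \<epsilon> V red"
  shows "real (card (copies P3o V red) + card (copies C4 V red) + card (copies C4bar V red))
           \<ge> \<epsilon> ^ 4 * real (card V) ^ 4 / 10 ^ 5"
proof -
  have fin: "finite V" using assms(2) by (simp add: edge_colouring_def)
  define k where "k = \<epsilon> * real (card V)"
  have deg: "\<forall>v\<in>V. k \<le> real (card (Nb V red v)) \<and> k \<le> real (card (Bb V red v))"
    using assms(3) unfolding locally_balanced_def red_deg_def blue_deg_def Nb_def Bb_def k_def by auto
  have rhs: "\<epsilon> ^ 4 * real (card V) ^ 4 / 10 ^ 5 = k^4/10^5" unfolding k_def by (simp add: power_mult_distrib)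
  define C where "C = card (copies P3o V red) + card (copies C4 V red) + card (copies C4bar V red)"
  have TC: "card (Tup V red) \<le> 2 * C" using Tup_copies[OF assms(2)] unfolding C_def by simp
  show ?thesis
  proof (cases "V = {}")
    case True
    then show ?thesis by simp
  next
    case False
    note ne = this
    have kpos: "0 < k" unfolding k_def using assms(1) ne fin by (simp add: card_gt_0_iff)
    show ?thesis
    proof (cases "k < 16")
      case True
      have nz: "\<forall>v\<in>V. Nb V red v \<noteq> {} \<and> Bb V red v \<noteq> {}"
      proof
        fix v assume v: "v \<in> V"
        show "Nb V red v \<noteq> {} \<and> Bb V red v \<noteq> {}"
        proof (intro conjI notI)
          assume "Nb V red v = {}"
          then show False using deg v kpos by auto
        next
          assume "Bb V red v = {}"
          then show False using deg v kpos by auto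
        qed
      qed
      have "Tup V red \<noteq> {}" by (rule exists_tup[OF assms(2) ne nz])
      then have "1 \<le> card (Tup V red)" using finite_Tup[OF fin] by (simp add: Suc_le_eq card_gt_0_iff)
      then have C1: "1 \<le> C" using TC by linarith
      have "k^4 < 16^4" using kpos True by (intro power_strict_mono) auto
      then have "k^4/10^5 < 1" by simp
      moreover have "(1::real) \<le> real C" using C1 by simp
      ultimately show ?thesis using rhs unfolding C_def by linarith
    next
      case False
      then have kk: "16 \<le> k" by simp
      have q: "k^4/128 \<le> real (card (Tup V red))" by (rule quant[OF assms(2) kk ne deg])
      have "real (card (Tup V red)) \<le> 2 * real C" using TC by (metis of_nat_le_iff of_nat_mult of_nat_numeral)
      moreover have "0 \<le> k^4" by simp
      ultimately have "k^4/100000 \<le> real C" using q by linarith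
      moreover have "k^4/10^5 = k^4/(100000::real)" by simp
      ultimately show ?thesis using rhs unfolding C_def by linarith
    qed
  qed
qed

end
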